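(* Let $a<b$ be real, $\phi:\mathbb{R}^n\to\mathbb{R}$ Schur-concave on $[a,b]^n$, $\alpha\in\mathbb{R}$, and $S^\alpha=\{(x,t)\mid\phi(x)\le t\le\alpha,\ x\in[a,b]^n\}$. For $x\in[a,b]^n$ let $S(x)=\sum_{i=1}^n(x_i-a)$. For $s\in[0,n(b-a)]$ let $i^s=\max\{i\in\{0,\dots,n\}\mid i(b-a)<s\}$ (with $i^0=0$) and define $u^s\in\mathbb{R}^n$ by $u^s_i=b$ for $i\le i^s$, $u^s_{i^s+1}=a+s-(b-a)i^s$, and $u^s_i=a$ for $i>i^s+1$. Let $\Theta^\alpha=\{(x,t)\mid\phi(u^{S(x)})\le t\le\alpha,\ x\in[a,b]^n\}$. Then $\mathrm{conv}(S^\alpha)=\mathrm{conv}(\Theta^\alpha)$. Moreover, if $\phi$ is component-wise convex on $[a,b]^n$, then $\Theta^\alpha$ is convex.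
   Context: $\phi$ is Schur-concave on $C$ if for all $x,y\in C$, $x\ge_m y$ implies $\phi(x)\le\phi(y)$, where $x\ge_m y$ means $\sum_{i=1}^j x_{[i]}\ge\sum_{i=1}^j y_{[i]}$ for $j<n$ with equality for $j=n$ ($x_{[i]}$ the $i$-th largest entry). $\phi$ is component-wise convex if it is convex in each single coordinate when all other coordinates are fixed. *)

theory Defs
  imports "HOL-Analysis.Analysis"
begin

text \<open>Vectors in R^n are modelled as real^'n::{finite,linorder} where the index type 'n::{finite,linorder} is finite and
  linearly ordered; n = CARD('n) and the order on 'n::{finite,linorder} gives the coordinates 1..n.\<close>

definition box_n :: "real \<Rightarrow> real \<Rightarrow> (real^'n::{finite,linorder}) set" where
  "box_n a b = {x. \<forall>i. a \<le> x $ i \<and> x $ i \<le> b}"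

text \<open>Entries of x sorted in decreasing order: element number k-1 is x_[k].\<close>
definition dec_entries :: "real^'n::{finite,linorder} \<Rightarrow> real list" where
  "dec_entries x = rev (sort (map (\<lambda>i. x $ i) (sorted_list_of_set (UNIV :: 'n set))))"

definition majorizes :: "real^'n::{finite,linorder} \<Rightarrow> real^'n::{finite,linorder} \<Rightarrow> bool" where
  "majorizes x y \<longleftrightarrow>
     (\<forall>j. 1 \<le> j \<and> j < CARD('n) \<longrightarrow>
        sum_list (take j (dec_entries x)) \<ge> sum_list (take j (dec_entries y))) \<and>
     sum_list (dec_entries x) = sum_list (dec_entries y)"

definition schur_concave_on :: "(real^'n::{finite,linorder}) set \<Rightarrow> (real^'n::{finite,linorder} \<Rightarrow> real) \<Rightarrow> bool" where
  "schur_concave_on C \<phi> \<longleftrightarrow> (\<forall>x\<in>C. \<forall>y\<in>C. majorizes x y \<longrightarrow> \<phi> x \<le> \<phi> y)"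

definition compwise_convex_on :: "real \<Rightarrow> real \<Rightarrow> (real^'n::{finite,linorder} \<Rightarrow> real) \<Rightarrow> bool" where
  "compwise_convex_on a b \<phi> \<longleftrightarrow>
     (\<forall>x\<in>box_n a b. \<forall>i. convex_on {a..b} (\<lambda>t. \<phi> (\<chi> j. if j = i then t else x $ j)))"

text \<open>0-based position of index j in the order of 'n::{finite,linorder} (so coordinate number rank j + 1).\<close>
definition rank_idx :: "'n::{finite,linorder} \<Rightarrow> nat" where
  "rank_idx j = card {k. k < j}"

definition S_sum :: "real \<Rightarrow> real^'n::{finite,linorder} \<Rightarrow> real" where
  "S_sum a x = (\<Sum>i\<in>UNIV. x $ i - a)"

definition i_star :: "nat \<Rightarrow> real \<Rightarrow> real \<Rightarrow> real \<Rightarrow> nat" where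
  "i_star n a b s = (if s = 0 then 0 else Max {i. i \<le> n \<and> real i * (b - a) < s})"

definition u_vec :: "real \<Rightarrow> real \<Rightarrow> real \<Rightarrow> real^'n::{finite,linorder}" where
  "u_vec a b s = (\<chi> j. let k = i_star CARD('n) a b s in
      if rank_idx j < k then b
      else if rank_idx j = k then a + s - (b - a) * real k
      else a)"

definition S_alpha :: "(real^'n::{finite,linorder} \<Rightarrow> real) \<Rightarrow> real \<Rightarrow> real \<Rightarrow> real \<Rightarrow> ((real^'n::{finite,linorder}) \<times> real) set" where
  "S_alpha \<phi> a b \<alpha> = {(x, t). \<phi> x \<le> t \<and> t \<le> \<alpha> \<and> x \<in> box_n a b}"

definition Theta_alpha :: "(real^'n::{finite,linorder} \<Rightarrow> real) \<Rightarrow> real \<Rightarrow> real \<Rightarrow> real \<Rightarrow> ((real^'n::{finite,linorder}) \<times> real) set" where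
  "Theta_alpha \<phi> a b \<alpha> = {(x, t). \<phi> (u_vec a b (S_sum a x)) \<le> t \<and> t \<le> \<alpha> \<and> x \<in> box_n a b}"

end

theory Submission
  imports Defs "HOL-Library.Multiset"
begin


lemma rank_mono:
  fixes j j' :: "'n::{finite,linorder}"
  assumes "j < j'" shows "rank_idx j < rank_idx j'"
proof -
  have "{k. k < j} \<subset> {k. k < j'}" using assms by auto
  then show ?thesis unfolding rank_idx_def by (intro psubset_card_mono) auto
qed

lemma rank_inj: "inj (rank_idx :: 'n::{finite,linorder} \<Rightarrow> nat)"
  by (metis injI linorder_neqE rank_mono less_irrefl)

lemma rank_lt: "rank_idx (j::'n::{finite,linorder}) < CARD('n)"
proof -
  have "{k. k < j} \<subset> UNIV" by auto
  then show ?thesis unfolding rank_idx_def by (intro psubset_card_mono) auto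
qed

lemma rank_bij: "bij_betw (rank_idx :: 'n::{finite,linorder} \<Rightarrow> nat) UNIV {..<CARD('n)}"
proof -
  have sub: "rank_idx ` (UNIV::'n set) \<subseteq> {..<CARD('n)}" using rank_lt by auto
  have "card (rank_idx ` (UNIV::'n set)) = CARD('n)"
    using card_image[OF rank_inj] by simp
  then have "rank_idx ` (UNIV::'n set) = {..<CARD('n)}"
    using sub by (intro card_subset_eq) auto
  then show ?thesis using rank_inj by (simp add: bij_betw_def)
qed

lemma rank_surj: "r < CARD('n) \<Longrightarrow> \<exists>j::'n::{finite,linorder}. rank_idx j = r"
  using rank_bij[where 'n='n] unfolding bij_betw_def by (metis imageE lessThan_iff)

lemma sum_rank: "(\<Sum>j\<in>(UNIV::'n::{finite,linorder} set). f (rank_idx j)) = (\<Sum>r<CARD('n). f r)"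
  using sum.reindex_bij_betw[OF rank_bij, of f] by simp



lemma msl: "mset (sorted_list_of_set A) = mset_set A"
  by (metis mset_sorted_list_of_multiset sorted_list_of_mset_set)

lemma dec_mset: "mset (dec_entries x) = image_mset (\<lambda>i. x $ i) (mset_set (UNIV::'n::{finite,linorder} set))"
  unfolding dec_entries_def by (simp add: msl)

lemma dec_sum: "sum_list (dec_entries (x::real^'n::{finite,linorder})) = (\<Sum>i\<in>UNIV. x $ i)"
  by (metis dec_mset sum_mset_sum_list sum_unfold_sum_mset)

lemma dec_length: "length (dec_entries (x::real^'n::{finite,linorder})) = CARD('n)"
  by (metis dec_mset size_mset size_image_mset size_mset_set)

lemma dec_set: "set (dec_entries (x::real^'n::{finite,linorder})) = range (\<lambda>i. x $ i)"
  by (metis dec_mset set_mset_mset set_image_mset finite_set_mset_mset_set finite elem_mset_set set_eqI finite_UNIV)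

lemma dec_eqI:
  assumes "mset L = image_mset (\<lambda>i. x $ i) (mset_set (UNIV::'n::{finite,linorder} set))"
    and "sorted (rev L)"
  shows "dec_entries x = L"
proof -
  have "sort (map (\<lambda>i. x $ i) (sorted_list_of_set (UNIV::'n set))) = rev L"
    using assms by (intro properties_for_sort) (simp_all add: msl)
  then show ?thesis unfolding dec_entries_def by simp
qed



definition Bset :: "real \<Rightarrow> real^'n::{finite,linorder} \<Rightarrow> 'n set" where
  "Bset b y = {i. y $ i = b}"
definition Aset :: "real \<Rightarrow> real^'n::{finite,linorder} \<Rightarrow> 'n set" where
  "Aset a y = {i. y $ i = a}"
definition Iset :: "real \<Rightarrow> real \<Rightarrow> real^'n::{finite,linorder} \<Rightarrow> 'n set" where
  "Iset a b y = {i. a < y $ i \<and> y $ i < b}"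
definition dsum :: "real \<Rightarrow> real \<Rightarrow> real^'n::{finite,linorder} \<Rightarrow> real" where
  "dsum a b y = (\<Sum>i\<in>Iset a b y. y $ i - a)"
definition cand :: "real \<Rightarrow> real \<Rightarrow> nat \<Rightarrow> real \<Rightarrow> nat \<Rightarrow> real list" where
  "cand a b m d r = replicate m b @ (if d = 0 then [] else [a + d]) @ replicate r a"

lemma card_le1_cases:
  assumes "card (X::'a set) \<le> 1" "finite X"
  shows "X = {} \<or> (\<exists>i. X = {i})"
  using assms by (metis One_nat_def card_le_Suc0_iff_eq ex_in_conv insertI1 subsetI subset_antisym
      singletonI singleton_iff)

lemma partition_box:
  assumes "a < b" "y \<in> box_n a b"
  shows "UNIV = Bset b y \<union> Iset a b y \<union> Aset a y"
    and "Bset b y \<inter> Iset a b y = {}" "(Bset b y \<union> Iset a b y) \<inter> Aset a y = {}"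
  using assms by (auto simp: Bset_def Iset_def Aset_def box_n_def order.order_iff_strict)

lemma dsum_props:
  assumes "a < b" "y \<in> box_n a b" "card (Iset a b y) \<le> 1"
  shows "0 \<le> dsum a b y" "dsum a b y < b - a" "dsum a b y = 0 \<longleftrightarrow> Iset a b y = {}"
proof -
  have "Iset a b y = {} \<or> (\<exists>i. Iset a b y = {i})" using card_le1_cases[OF assms(3) finite] by blast
  then consider "Iset a b y = {}" | i where "Iset a b y = {i}" by blast
  then have "0 \<le> dsum a b y \<and> dsum a b y < b - a \<and> (dsum a b y = 0 \<longleftrightarrow> Iset a b y = {})"
  proof cases
    case 1 then show ?thesis using assms by (simp add: dsum_def)
  next
    case 2
    then have "a < y $ i" "y $ i < b" by (auto simp: Iset_def)
    then show ?thesis using 2 by (simp add: dsum_def)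
  qed
  then show "0 \<le> dsum a b y" "dsum a b y < b - a" "dsum a b y = 0 \<longleftrightarrow> Iset a b y = {}" by auto
qed

lemma card_partition:
  fixes y :: "real^'n::{finite,linorder}"
  assumes "a < b" "y \<in> box_n a b"
  shows "card (Bset b y) + card (Iset a b y) + card (Aset a y) = CARD('n)"
proof -
  have "CARD('n) = card (Bset b y \<union> Iset a b y \<union> Aset a y)" using partition_box(1)[OF assms] by simp
  also have "\<dots> = card (Bset b y \<union> Iset a b y) + card (Aset a y)"
    using partition_box(3)[OF assms] by (intro card_Un_disjoint) auto
  also have "card (Bset b y \<union> Iset a b y) = card (Bset b y) + card (Iset a b y)"
    using partition_box(2)[OF assms] by (intro card_Un_disjoint) auto
  finally show ?thesis by simp
qed

lemma S_sum_decomp: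
  assumes "a < b" "y \<in> box_n a b"
  shows "S_sum a y = real (card (Bset b y)) * (b - a) + dsum a b y"
proof -
  let ?f = "\<lambda>i. y $ i - a"
  have "S_sum a y = sum ?f (Bset b y \<union> Iset a b y \<union> Aset a y)"
    unfolding S_sum_def using partition_box(1)[OF assms] by simp
  also have "\<dots> = sum ?f (Bset b y \<union> Iset a b y) + sum ?f (Aset a y)"
    using partition_box(3)[OF assms] by (intro sum.union_disjoint) auto
  also have "sum ?f (Aset a y) = 0" by (simp add: Aset_def)
  also have "sum ?f (Bset b y \<union> Iset a b y) = sum ?f (Bset b y) + sum ?f (Iset a b y)"
    using partition_box(2)[OF assms] by (intro sum.union_disjoint) auto
  also have "sum ?f (Bset b y) = real (card (Bset b y)) * (b - a)" by (simp add: Bset_def)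
  finally show ?thesis by (simp add: dsum_def)
qed

lemma dec_cand:
  assumes "a < b" "y \<in> box_n a b" "card (Iset a b y) \<le> 1"
  shows "dec_entries y = cand a b (card (Bset b y)) (dsum a b y) (card (Aset a y))"
proof (rule dec_eqI)
  let ?f = "\<lambda>i. y $ i"
  have cB: "image_mset ?f (mset_set (Bset b y)) = replicate_mset (card (Bset b y)) b"
  proof -
    have "image_mset ?f (mset_set (Bset b y)) = image_mset (\<lambda>_. b) (mset_set (Bset b y))"
      by (intro image_mset_cong) (simp add: Bset_def)
    then show ?thesis by (simp add: image_mset_const_eq)
  qed
  have cA: "image_mset ?f (mset_set (Aset a y)) = replicate_mset (card (Aset a y)) a"
  proof -
    have "image_mset ?f (mset_set (Aset a y)) = image_mset (\<lambda>_. a) (mset_set (Aset a y))"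
      by (intro image_mset_cong) (simp add: Aset_def)
    then show ?thesis by (simp add: image_mset_const_eq)
  qed
  have cI: "image_mset ?f (mset_set (Iset a b y)) = mset (if dsum a b y = 0 then [] else [a + dsum a b y])"
  proof -
    have "Iset a b y = {} \<or> (\<exists>i. Iset a b y = {i})" using card_le1_cases[OF assms(3) finite] by blast
    then consider "Iset a b y = {}" | i where "Iset a b y = {i}" by blast
    then show ?thesis
    proof cases
      case 1 then show ?thesis using dsum_props[OF assms] by simp
    next
      case 2
      then have "a < y $ i" by (auto simp: Iset_def)
      then show ?thesis using 2 dsum_props[OF assms] by (simp add: dsum_def)
    qed
  qed
  have "image_mset ?f (mset_set (UNIV::'a set)) = image_mset ?f (mset_set (Bset b y \<union> Iset a b y \<union> Aset a y))"
    using partition_box(1)[OF assms(1,2)] by simp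
  also have "\<dots> = image_mset ?f (mset_set (Bset b y)) + image_mset ?f (mset_set (Iset a b y)) + image_mset ?f (mset_set (Aset a y))"
    using partition_box(2,3)[OF assms(1,2)] by (simp add: mset_set_Union)
  finally show "mset (cand a b (card (Bset b y)) (dsum a b y) (card (Aset a y))) = image_mset ?f (mset_set UNIV)"
    using cA cB cI by (simp add: cand_def)
  show "sorted (rev (cand a b (card (Bset b y)) (dsum a b y) (card (Aset a y))))"
    using dsum_props[OF assms] assms(1) by (auto simp: cand_def sorted_append)
qed



lemma take_cand:
  assumes "j \<le> m + (if d = 0 then 0 else 1) + r"
  shows "sum_list (take j (cand a b m d r)) = (if j \<le> m then real j * b else real j * a + real m * (b - a) + d)"
proof (cases "j \<le> m")
  case True
  then show ?thesis by (simp add: cand_def sum_list_replicate)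
next
  case False
  then have tk: "take j (cand a b m d r) = replicate m b @ take (j - m) ((if d = 0 then [] else [a + d]) @ replicate r a)"
    by (simp add: cand_def)
  show ?thesis
  proof (cases "d = 0")
    case True
    then have "j - m \<le> r" using assms by simp
    then have "sum_list (take j (cand a b m d r)) = real m * b + real (j - m) * a"
      using tk True by (simp add: sum_list_replicate min_def)
    also have "\<dots> = real j * a + real m * (b - a) + d"
      using False True by (simp add: of_nat_diff algebra_simps)
    finally show ?thesis using False by simp
  next
    case d: False
    obtain k where k: "j - m = Suc k" using False by (metis Suc_diff_Suc not_le)
    then have "k \<le> r" using assms d by simp
    then have "sum_list (take j (cand a b m d r)) = real m * b + (a + d) + real k * a"
      using tk d k by (simp add: sum_list_replicate min_def)
    also have "\<dots> = real j * a + real m * (b - a) + d"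
    proof -
      have "real j = real m + 1 + real k" using k False by linarith
      then show ?thesis by (simp add: algebra_simps)
    qed
    finally show ?thesis using False by simp
  qed
qed

lemma length_cand: "length (cand a b m d r) = m + (if d = 0 then 0 else 1) + r"
  by (simp add: cand_def)

lemma sum_list_le_len: "(\<And>z. z \<in> set xs \<Longrightarrow> z \<le> c) \<Longrightarrow> sum_list xs \<le> real (length xs) * (c::real)"
  by (induct xs) (auto simp: algebra_simps add_mono)

lemma sum_list_ge_len: "(\<And>z. z \<in> set xs \<Longrightarrow> c \<le> z) \<Longrightarrow> real (length xs) * (c::real) \<le> sum_list xs"
  by (induct xs) (auto simp: algebra_simps add_mono)

lemma sum_dec_S: "sum_list (dec_entries (x::real^'n::{finite,linorder})) = real CARD('n) * a + S_sum a x"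
  by (simp add: dec_sum S_sum_def sum_subtractf)

lemma majorizes_ext:
  fixes x y :: "real^'n::{finite,linorder}"
  assumes ab: "a < b" and x: "x \<in> box_n a b" and y: "y \<in> box_n a b"
    and I1: "card (Iset a b y) \<le> 1" and S: "S_sum a y = S_sum a x"
  shows "majorizes y x"
  unfolding majorizes_def
proof (intro conjI allI impI)
  show "sum_list (dec_entries y) = sum_list (dec_entries x)" using S by (simp add: sum_dec_S[of y a] sum_dec_S[of x a])
  fix j assume j: "1 \<le> j \<and> j < CARD('n)"
  let ?m = "card (Bset b y)" and ?d = "dsum a b y" and ?r = "card (Aset a y)"
  have dz: "?d = 0 \<longleftrightarrow> Iset a b y = {}" using dsum_props[OF ab y I1] by simp
  have cI: "card (Iset a b y) = (if ?d = 0 then 0 else 1)"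
    using I1 dz by (metis card_0_eq finite le_Suc_eq le_zero_eq One_nat_def)
  have len: "?m + (if ?d = 0 then 0 else 1) + ?r = CARD('n)"
    using card_partition[OF ab y] cI by simp
  have ty: "sum_list (take j (dec_entries y)) = (if j \<le> ?m then real j * b else real j * a + S_sum a y)"
    using dec_cand[OF ab y I1] take_cand[of j ?m ?d ?r a b] len j S_sum_decomp[OF ab y]
    by (simp add: algebra_simps)
  have setx: "\<And>z. z \<in> set (dec_entries x) \<Longrightarrow> a \<le> z \<and> z \<le> b"
    using x by (auto simp: dec_set box_n_def)
  have lt: "length (take j (dec_entries x)) = j" using j by (simp add: dec_length)
  have ld: "length (drop j (dec_entries x)) = CARD('n) - j" by (simp add: dec_length)
  have t1: "sum_list (take j (dec_entries x)) \<le> real j * b"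
  proof -
    have "\<And>z. z \<in> set (take j (dec_entries x)) \<Longrightarrow> z \<le> b" using setx by (meson in_set_takeD)
    then show ?thesis using sum_list_le_len[of "take j (dec_entries x)" b] lt by simp
  qed
  have "real (CARD('n) - j) * a \<le> sum_list (drop j (dec_entries x))"
  proof -
    have "\<And>z. z \<in> set (drop j (dec_entries x)) \<Longrightarrow> a \<le> z" using setx by (meson in_set_dropD)
    then show ?thesis using sum_list_ge_len[of "drop j (dec_entries x)" a] ld by simp
  qed
  moreover have "sum_list (dec_entries x) = sum_list (take j (dec_entries x)) + sum_list (drop j (dec_entries x))"
    by (metis append_take_drop_id sum_list_append)
  ultimately have t2: "sum_list (take j (dec_entries x)) \<le> real j * a + S_sum a x"
    using j by (simp add: sum_dec_S[of x a] of_nat_diff algebra_simps)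
  show "sum_list (take j (dec_entries x)) \<le> sum_list (take j (dec_entries y))"
    using t1 t2 ty S by auto
qed



lemma nat_frac_unique:
  fixes h d1 d2 :: real
  assumes "real m1 * h + d1 = real m2 * h + d2" "0 \<le> d1" "d1 < h" "0 \<le> d2" "d2 < h"
  shows "m1 = m2 \<and> d1 = d2"
proof -
  have "m1 = m2"
  proof (rule ccontr)
    assume "m1 \<noteq> m2"
    then consider "m1 < m2" | "m2 < m1" by linarith
    then show False
    proof cases
      case 1
      then have "real m1 + 1 \<le> real m2" by linarith
      then have "(real m1 + 1) * h \<le> real m2 * h" using assms by (intro mult_right_mono) auto
      then show False using assms by (simp add: algebra_simps)
    next
      case 2
      then have "real m2 + 1 \<le> real m1" by linarith
      then have "(real m2 + 1) * h \<le> real m1 * h" using assms by (intro mult_right_mono) auto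
      then show False using assms by (simp add: algebra_simps)
    qed
  qed
  then show ?thesis using assms by simp
qed

lemma dec_eq_sameS:
  fixes y z :: "real^'n::{finite,linorder}"
  assumes ab: "a < b" and y: "y \<in> box_n a b" and z: "z \<in> box_n a b"
    and Iy: "card (Iset a b y) \<le> 1" and Iz: "card (Iset a b z) \<le> 1"
    and S: "S_sum a y = S_sum a z"
  shows "dec_entries y = dec_entries z"
proof -
  have e: "card (Bset b y) = card (Bset b z) \<and> dsum a b y = dsum a b z"
  proof -
    have eq: "real (card (Bset b y)) * (b - a) + dsum a b y = real (card (Bset b z)) * (b - a) + dsum a b z"
      using S S_sum_decomp[OF ab y] S_sum_decomp[OF ab z] by simp
    show ?thesis
      using nat_frac_unique[OF eq dsum_props(1,2)[OF ab y Iy] dsum_props(1,2)[OF ab z Iz]] by simp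
  qed
  have cI: "\<And>w::real^'n::{finite,linorder}. w \<in> box_n a b \<Longrightarrow> card (Iset a b w) \<le> 1 \<Longrightarrow>
      card (Iset a b w) = (if dsum a b w = 0 then 0 else 1)"
  proof -
    fix w :: "real^'n::{finite,linorder}" assume w: "w \<in> box_n a b" "card (Iset a b w) \<le> 1"
    have dz: "dsum a b w = 0 \<longleftrightarrow> Iset a b w = {}" using dsum_props[OF ab w] by simp
    then show "card (Iset a b w) = (if dsum a b w = 0 then 0 else 1)"
      using w(2) by (metis card_0_eq finite le_Suc_eq le_zero_eq One_nat_def)
  qed
  have "card (Aset a y) = card (Aset a z)"
    using card_partition[OF ab y] card_partition[OF ab z] cI[OF y Iy] cI[OF z Iz] e by simp
  then show ?thesis using dec_cand[OF ab y Iy] dec_cand[OF ab z Iz] e by simp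
qed

lemma majorizes_refl_dec: "dec_entries x = dec_entries y \<Longrightarrow> majorizes x y"
  by (simp add: majorizes_def)

definition vk :: "real \<Rightarrow> real \<Rightarrow> nat \<Rightarrow> real \<Rightarrow> real^'n::{finite,linorder}" where
  "vk a b k t = (\<chi> j. if rank_idx j < k then b else if rank_idx j = k then t else a)"

lemma vk_box: "a \<le> b \<Longrightarrow> a \<le> t \<Longrightarrow> t \<le> b \<Longrightarrow> vk a b k t \<in> box_n a b"
  by (simp add: vk_def box_n_def)

lemma vk_I:  "card (Iset a b (vk a b k t :: real^'n::{finite,linorder})) \<le> 1"
proof -
  have "Iset a b (vk a b k t :: real^'n::{finite,linorder}) \<subseteq> {j. rank_idx j = k}"
    by (auto simp: Iset_def vk_def split: if_splits)
  moreover have "card {j::'n. rank_idx j = k} \<le> 1"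
    using rank_inj[where 'n='n] by (metis (mono_tags, lifting) card_le_Suc0_iff_eq finite injD mem_Collect_eq One_nat_def)
  ultimately show ?thesis by (meson card_mono finite dual_order.trans)
qed

lemma vk_S:
  assumes "k < CARD('n::{finite,linorder})"
  shows "S_sum a (vk a b k t :: real^'n::{finite,linorder}) = real k * (b - a) + (t - a)"
proof -
  have "S_sum a (vk a b k t :: real^'n::{finite,linorder}) =
     (\<Sum>j\<in>(UNIV::'n set). (\<lambda>r. (if r < k then b - a else 0) + (if r = k then t - a else 0)) (rank_idx j))"
    unfolding S_sum_def vk_def by (intro sum.cong) auto
  also have "\<dots> = (\<Sum>r<CARD('n). (if r < k then b - a else 0) + (if r = k then t - a else 0))"
    by (rule sum_rank)
  also have "\<dots> = (\<Sum>r<CARD('n). (if r < k then b - a else 0)) + (t - a)"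
    using assms by (simp add: sum.distrib)
  also have "(\<Sum>r<CARD('n). (if r < k then b - a else 0)) = (\<Sum>r\<in>{..<k}. b - a)"
    using assms by (intro sum.mono_neutral_cong_right) auto
  finally show ?thesis by simp
qed

lemma istar_props:
  assumes ab: "a < b" and s: "0 \<le> s" "s \<le> real n * (b - a)" and n: "0 < n"
  shows "i_star n a b s < n \<and> ((s = 0 \<and> i_star n a b s = 0) \<or>
     (real (i_star n a b s) * (b - a) < s \<and> s \<le> (real (i_star n a b s) + 1) * (b - a)))"
proof (cases "s = 0")
  case True then show ?thesis using n by (simp add: i_star_def)
next
  case False
  let ?X = "{i. i \<le> n \<and> real i * (b - a) < s}"
  have fin: "finite ?X" by simp
  have ne: "0 \<in> ?X" using False s by simp
  let ?k = "Max ?X"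
  have kX: "?k \<in> ?X" using fin ne Max_in by blast
  have kn: "?k < n"
  proof (rule ccontr)
    assume "\<not> ?k < n" then have "?k = n" using kX by simp
    then show False using kX s by simp
  qed
  have "Suc ?k \<notin> ?X" using Max_ge[OF fin] by (metis Suc_n_not_le_n)
  then have "s \<le> (real ?k + 1) * (b - a)" using kn by (auto simp: not_less add.commute)
  then show ?thesis using False kn kX by (simp add: i_star_def)
qed

lemma istar_eq:
  assumes ab: "a < b" and k: "k < n" and s: "real k * (b - a) < s" "s \<le> (real k + 1) * (b - a)"
  shows "i_star n a b s = k"
proof -
  have "0 \<le> real k * (b - a)" using ab by simp
  then have s0: "s \<noteq> 0" using s by linarith
  let ?X = "{i. i \<le> n \<and> real i * (b - a) < s}"
  have "Max ?X = k"
  proof (rule Max_eqI)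
    show "finite ?X" by simp
    show "k \<in> ?X" using k s by simp
    fix i assume "i \<in> ?X"
    then have "real i * (b - a) < (real k + 1) * (b - a)" using s by simp
    then have "real i < real k + 1" using ab by (simp add: mult_less_cancel_right)
    then show "i \<le> k" by linarith
  qed
  then show ?thesis using s0 by (simp add: i_star_def)
qed

lemma u_vk: "u_vec a b s = (vk a b (i_star CARD('n) a b s) (a + s - (b - a) * real (i_star CARD('n) a b s)) :: real^'n::{finite,linorder})"
  by (simp add: u_vec_def vk_def Let_def)

lemma u_props:
  assumes ab: "a < b" and s: "0 \<le> s" "s \<le> real CARD('n) * (b - a)"
  shows "(u_vec a b s :: real^'n::{finite,linorder}) \<in> box_n a b \<and> card (Iset a b (u_vec a b s :: real^'n::{finite,linorder})) \<le> 1
     \<and> S_sum a (u_vec a b s :: real^'n::{finite,linorder}) = s"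
proof -
  let ?k = "i_star CARD('n) a b s"
  have P: "?k < CARD('n) \<and> ((s = 0 \<and> ?k = 0) \<or> (real ?k * (b - a) < s \<and> s \<le> (real ?k + 1) * (b - a)))"
    using istar_props[OF ab s] by simp
  let ?c = "a + s - (b - a) * real ?k"
  have c: "a \<le> ?c \<and> ?c \<le> b" using P ab by (auto simp: algebra_simps)
  have b1: "(vk a b ?k ?c :: real^'n::{finite,linorder}) \<in> box_n a b" using vk_box[of a b ?c] c ab by simp
  have b2: "S_sum a (vk a b ?k ?c :: real^'n::{finite,linorder}) = s"
    using vk_S[where 'n='n, of ?k a b ?c] P by (simp add: algebra_simps)
  show ?thesis unfolding u_vk using b1 b2 vk_I[where 'n='n] by simp
qed

lemma S_range:
  assumes "x \<in> box_n a b"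
  shows "0 \<le> S_sum a (x::real^'n::{finite,linorder}) \<and> S_sum a x \<le> real CARD('n) * (b - a)"
proof -
  have "S_sum a x \<le> (\<Sum>i\<in>(UNIV::'n set). b - a)" unfolding S_sum_def
    using assms by (intro sum_mono) (auto simp: box_n_def)
  moreover have "0 \<le> S_sum a x" unfolding S_sum_def using assms by (intro sum_nonneg) (auto simp: box_n_def)
  ultimately show ?thesis by simp
qed



lemma reduce:
  fixes x :: "real^'n::{finite,linorder}" and t :: real
  assumes ab: "a < b" and xb: "x \<in> box_n a b"
  shows "(x, t) \<in> convex hull {(y, t) | y. y \<in> box_n a b \<and> S_sum a y = S_sum a x \<and> card (Iset a b y) \<le> 1}"
  using xb
proof (induction "card (Iset a b x)" arbitrary: x rule: less_induct)
  case less
  define P where "P = {(y, t) | y::real^'n::{finite,linorder}. y \<in> box_n a b \<and> S_sum a y = S_sum a x \<and> card (Iset a b y) \<le> 1}"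
  show ?case
  proof (cases "card (Iset a b x) \<le> 1")
    case True
    then have "(x, t) \<in> P" using less.prems by (auto simp: P_def)
    then show ?thesis unfolding P_def by (rule hull_inc)
  next
    case False
    then obtain i j where ij: "i \<in> Iset a b x" "j \<in> Iset a b x" "i \<noteq> j"
      by (metis One_nat_def card_le_Suc0_iff_eq finite)
    have xi: "a < x $ i" "x $ i < b" and xj: "a < x $ j" "x $ j < b" using ij by (auto simp: Iset_def)
    define e :: "real^'n::{finite,linorder}" where "e = (\<chi> l. (if l = i then 1 else 0) - (if l = j then 1 else 0))"
    define mv where "mv \<tau> = x + \<tau> *\<^sub>R e" for \<tau>
    have mvc: "mv \<tau> $ l = (if l = i then x $ i + \<tau> else if l = j then x $ j - \<tau> else x $ l)" for \<tau> l
      using ij(3) by (auto simp: mv_def e_def)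
    have esum: "(\<Sum>l\<in>UNIV. e $ l) = 0" by (simp add: e_def sum_subtractf)
    have mvS: "S_sum a (mv \<tau>) = S_sum a x" for \<tau>
    proof -
      have "S_sum a (mv \<tau>) = (\<Sum>l\<in>UNIV. (x $ l - a) + \<tau> * e $ l)"
        unfolding S_sum_def mv_def by (intro sum.cong) auto
      also have "\<dots> = S_sum a x + \<tau> * (\<Sum>l\<in>UNIV. e $ l)"
        by (simp add: S_sum_def sum.distrib sum_distrib_left)
      finally show ?thesis using esum by simp
    qed
    define \<tau>1 where "\<tau>1 = min (b - x $ i) (x $ j - a)"
    define \<tau>2 where "\<tau>2 = min (x $ i - a) (b - x $ j)"
    have t1: "0 < \<tau>1" and t2: "0 < \<tau>2" using xi xj by (auto simp: \<tau>1_def \<tau>2_def)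
    define y where "y = mv \<tau>1"
    define z where "z = mv (- \<tau>2)"
    have yb: "y \<in> box_n a b" using less.prems xi xj t1
      by (auto simp: box_n_def y_def mvc \<tau>1_def)
    have zb: "z \<in> box_n a b" using less.prems xi xj t2
      by (auto simp: box_n_def z_def mvc \<tau>2_def)
    have yI: "Iset a b y \<subset> Iset a b x"
    proof
      show "Iset a b y \<subseteq> Iset a b x" using ij by (auto simp: Iset_def y_def mvc)
      show "Iset a b y \<noteq> Iset a b x"
      proof (cases "\<tau>1 = b - x $ i")
        case True then have "i \<notin> Iset a b y" by (simp add: Iset_def y_def mvc)
        then show ?thesis using ij by auto
      next
        case False then have "\<tau>1 = x $ j - a" by (auto simp: \<tau>1_def min_def)
        then have "j \<notin> Iset a b y" using ij by (simp add: Iset_def y_def mvc)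
        then show ?thesis using ij by auto
      qed
    qed
    have zI: "Iset a b z \<subset> Iset a b x"
    proof
      show "Iset a b z \<subseteq> Iset a b x" using ij by (auto simp: Iset_def z_def mvc)
      show "Iset a b z \<noteq> Iset a b x"
      proof (cases "\<tau>2 = x $ i - a")
        case True then have "i \<notin> Iset a b z" by (simp add: Iset_def z_def mvc)
        then show ?thesis using ij by auto
      next
        case False then have "\<tau>2 = b - x $ j" by (auto simp: \<tau>2_def min_def)
        then have "j \<notin> Iset a b z" using ij by (simp add: Iset_def z_def mvc)
        then show ?thesis using ij by auto
      qed
    qed
    have yh: "(y, t) \<in> convex hull P"
      using less.hyps[OF psubset_card_mono[OF finite yI] yb] mvS by (simp add: P_def y_def)
    have zh: "(z, t) \<in> convex hull P"
      using less.hyps[OF psubset_card_mono[OF finite zI] zb] mvS by (simp add: P_def z_def)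
    define u where "u = \<tau>2 / (\<tau>1 + \<tau>2)"
    define v where "v = \<tau>1 / (\<tau>1 + \<tau>2)"
    have den: "0 < \<tau>1 + \<tau>2" using t1 t2 by simp
    have uv1: "0 \<le> u" "0 \<le> v" using t1 t2 by (simp_all add: u_def v_def)
    have "u + v = (\<tau>2 + \<tau>1) / (\<tau>1 + \<tau>2)" by (simp add: u_def v_def add_divide_distrib)
    then have uv2: "u + v = 1" using den by (simp add: add.commute)
    note uv = uv1 uv2
    have comb: "u *\<^sub>R y + v *\<^sub>R z = x"
    proof -
      have "u *\<^sub>R y + v *\<^sub>R z = (u + v) *\<^sub>R x + (u * \<tau>1 - v * \<tau>2) *\<^sub>R e"
        by (simp add: y_def z_def mv_def algebra_simps)
      also have "u * \<tau>1 - v * \<tau>2 = 0" using den by (simp add: u_def v_def field_simps)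
      finally show ?thesis using uv by simp
    qed
    have "u *\<^sub>R (y, t) + v *\<^sub>R (z, t) \<in> convex hull P"
      by (rule convexD[OF convex_convex_hull yh zh uv])
    moreover have "u *\<^sub>R (y, t) + v *\<^sub>R (z, t) = (x, t)"
    proof -
      have "u * t + v * t = t" using uv2 by (metis distrib_right mult_1)
      then show ?thesis using comb by simp
    qed
    ultimately show ?thesis by (simp add: P_def)
  qed
qed



lemma part1:
  fixes \<phi> :: "real^'n::{finite,linorder} \<Rightarrow> real"
  assumes ab: "a < b" and sc: "schur_concave_on (box_n a b) \<phi>"
  shows "convex hull (S_alpha \<phi> a b \<alpha>) = convex hull (Theta_alpha \<phi> a b \<alpha>)"
proof -
  have uP: "\<And>x::real^'n::{finite,linorder}. x \<in> box_n a b \<Longrightarrow>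
      (u_vec a b (S_sum a x) :: real^'n::{finite,linorder}) \<in> box_n a b \<and>
      card (Iset a b (u_vec a b (S_sum a x) :: real^'n::{finite,linorder})) \<le> 1 \<and>
      S_sum a (u_vec a b (S_sum a x) :: real^'n::{finite,linorder}) = S_sum a x"
    using u_props[OF ab] S_range by blast
  have ST: "S_alpha \<phi> a b \<alpha> \<subseteq> Theta_alpha \<phi> a b \<alpha>"
  proof
    fix p assume "p \<in> S_alpha \<phi> a b \<alpha>"
    then obtain x t where p: "p = (x, t)" "\<phi> x \<le> t" "t \<le> \<alpha>" "x \<in> box_n a b"
      by (auto simp: S_alpha_def)
    let ?u = "u_vec a b (S_sum a x) :: real^'n::{finite,linorder}"
    have "majorizes ?u x" using uP[OF p(4)] by (intro majorizes_ext[OF ab p(4)]) auto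
    then have "\<phi> ?u \<le> \<phi> x" using sc uP[OF p(4)] p(4) by (auto simp: schur_concave_on_def)
    then show "p \<in> Theta_alpha \<phi> a b \<alpha>" using p by (auto simp: Theta_alpha_def)
  qed
  have TS: "Theta_alpha \<phi> a b \<alpha> \<subseteq> convex hull (S_alpha \<phi> a b \<alpha>)"
  proof
    fix p assume "p \<in> Theta_alpha \<phi> a b \<alpha>"
    then obtain x t where p: "p = (x, t)" "\<phi> (u_vec a b (S_sum a x)) \<le> t" "t \<le> \<alpha>" "x \<in> box_n a b"
      by (auto simp: Theta_alpha_def)
    let ?u = "u_vec a b (S_sum a x) :: real^'n::{finite,linorder}"
    let ?P = "{(y, t) | y::real^'n::{finite,linorder}. y \<in> box_n a b \<and> S_sum a y = S_sum a x \<and> card (Iset a b y) \<le> 1}"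
    have "?P \<subseteq> S_alpha \<phi> a b \<alpha>"
    proof
      fix q assume "q \<in> ?P"
      then obtain y where q: "q = (y, t)" "y \<in> box_n a b" "S_sum a y = S_sum a x" "card (Iset a b y) \<le> 1"
        by blast
      have u3: "?u \<in> box_n a b" "card (Iset a b ?u) \<le> 1" "S_sum a ?u = S_sum a x"
        using uP[OF p(4)] by auto
      have "S_sum a y = S_sum a ?u" using q(3) u3(3) by simp
      then have "dec_entries y = dec_entries ?u"
        by (rule dec_eq_sameS[OF ab q(2) u3(1) q(4) u3(2)])
      then have "majorizes y ?u" by (rule majorizes_refl_dec)
      then have "\<phi> y \<le> \<phi> ?u" using sc uP[OF p(4)] q(2) by (auto simp: schur_concave_on_def)
      then show "q \<in> S_alpha \<phi> a b \<alpha>" using q p by (auto simp: S_alpha_def)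
    qed
    then have "convex hull ?P \<subseteq> convex hull (S_alpha \<phi> a b \<alpha>)" by (rule hull_mono)
    then show "p \<in> convex hull (S_alpha \<phi> a b \<alpha>)" using reduce[OF ab p(4), of t] p(1) by auto
  qed
  show ?thesis
  proof
    show "convex hull S_alpha \<phi> a b \<alpha> \<subseteq> convex hull Theta_alpha \<phi> a b \<alpha>" using ST by (rule hull_mono)
    show "convex hull Theta_alpha \<phi> a b \<alpha> \<subseteq> convex hull S_alpha \<phi> a b \<alpha>"
      using TS by (intro hull_minimal) (auto simp: convex_convex_hull)
  qed
qed



lemma junction_abstract:
  fixes \<psi> :: "real \<Rightarrow> real \<Rightarrow> real"
  assumes ab: "a < b"
    and cp: "\<And>q. q \<in> {a..b} \<Longrightarrow> convex_on {a..b} (\<lambda>p. \<psi> p q)"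
    and cq: "\<And>p. p \<in> {a..b} \<Longrightarrow> convex_on {a..b} (\<lambda>q. \<psi> p q)"
    and sc: "\<And>y. 0 \<le> y \<Longrightarrow> y \<le> b - a \<Longrightarrow> \<psi> b a \<le> \<psi> (b - y) (a + y)"
    and x: "0 < x" "x \<le> b - a" and y': "0 < y'" "y' \<le> b - a"
  shows "(\<psi> b a - \<psi> (b - x) a) / x \<le> (\<psi> b (a + y') - \<psi> b a) / y'"
proof (rule ccontr)
  define h where "h = b - a"
  have h: "0 < h" using ab by (simp add: h_def)
  define A where "A = \<psi> b a"
  define P where "P = \<psi> (b - x) a"
  define K where "K = \<psi> (b - x) b - \<psi> (b - x) a"
  define DL where "DL = (A - P) / x"
  define DR where "DR = (\<psi> b (a + y') - A) / y'"
  assume "\<not> ?thesis"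
  then have lt: "DR < DL" by (simp add: DL_def DR_def A_def P_def)
  define c where "c = K / h - DR"
  define \<epsilon> where "\<epsilon> = DL - DR"
  have eps: "0 < \<epsilon>" using lt by (simp add: \<epsilon>_def)
  define y where "y = min x (min y' (x * \<epsilon> / (\<bar>c\<bar> + 1)))"
  have y0: "0 < y" using x y' eps by (simp add: y_def)
  have yx: "y \<le> x" and yy': "y \<le> y'" and yc: "y \<le> x * \<epsilon> / (\<bar>c\<bar> + 1)" by (simp_all add: y_def)
  have yh: "y \<le> h" using yx x by (simp add: h_def)
  have qy: "a + y \<in> {a..b}" using y0 yh by (simp add: h_def)
  have i: "\<psi> (b - y) (a + y) \<le> (1 - y / x) * \<psi> b (a + y) + (y / x) * \<psi> (b - x) (a + y)"
  proof -
    have "(\<lambda>p. \<psi> p (a + y)) ((1 - y / x) *\<^sub>R b + (y / x) *\<^sub>R (b - x)) \<le>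
        (1 - y / x) * (\<lambda>p. \<psi> p (a + y)) b + (y / x) * (\<lambda>p. \<psi> p (a + y)) (b - x)"
      using x y0 yx ab by (intro convex_onD[OF cp[OF qy]]) (auto simp: h_def)
    moreover have "(1 - y / x) *\<^sub>R b + (y / x) *\<^sub>R (b - x) = b - y" using x by (simp add: field_simps)
    ultimately show ?thesis by simp
  qed
  have px: "b - x \<in> {a..b}" using x by (simp add: h_def)
  have ii: "\<psi> (b - x) (a + y) \<le> P + (y / h) * K"
  proof -
    have "(\<lambda>q. \<psi> (b - x) q) ((1 - y / h) *\<^sub>R a + (y / h) *\<^sub>R b) \<le>
        (1 - y / h) * (\<lambda>q. \<psi> (b - x) q) a + (y / h) * (\<lambda>q. \<psi> (b - x) q) b"
      using h y0 yh ab by (intro convex_onD[OF cq[OF px]]) auto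
    moreover have "(1 - y / h) *\<^sub>R a + (y / h) *\<^sub>R b = a + y"
    proof -
      have "(1 - y / h) *\<^sub>R a + (y / h) *\<^sub>R b = a + (y / h) * (b - a)" using h by (simp add: field_simps)
      then show ?thesis using h by (simp add: h_def[symmetric])
    qed
    ultimately show ?thesis by (simp add: P_def K_def algebra_simps)
  qed
  have iii: "A \<le> \<psi> (b - y) (a + y)" using sc[of y] y0 yh by (simp add: A_def h_def)
  have pb: "b \<in> {a..b}" using ab by simp
  have iv: "\<psi> b (a + y) \<le> A + y * DR"
  proof (cases "y = y'")
    case True then show ?thesis using y' by (simp add: DR_def)
  next
    case False
    then have "y < y'" using yy' by simp
    have sl: "(\<psi> b a - \<psi> b (a + y)) / (a - (a + y)) \<le> (\<psi> b a - \<psi> b (a + y')) / (a - (a + y'))"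
      by (rule convex_on_slope_le(1)[OF cq[OF pb]]) (use y0 y' ab \<open>y < y'\<close> in \<open>auto simp: h_def\<close>)
    have e1: "(\<psi> b a - \<psi> b (a + y)) / (a - (a + y)) = (\<psi> b (a + y) - A) / y"
      using y0 by (simp add: A_def field_simps)
    have e2: "(\<psi> b a - \<psi> b (a + y')) / (a - (a + y')) = DR"
      using y' by (simp add: A_def DR_def field_simps)
    have "(\<psi> b (a + y) - A) / y \<le> DR" using sl e1 e2 by simp
    then have "\<psi> b (a + y) - A \<le> DR * y" using pos_divide_le_eq[OF y0] by blast
    then show ?thesis by (simp add: mult.commute)
  qed
  have yx0: "0 \<le> 1 - y / x" "0 \<le> y / x" using yx x y0 by simp_all
  have S3: "A \<le> (1 - y / x) * (A + y * DR) + (y / x) * (P + (y / h) * K)"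
  proof -
    have "A \<le> (1 - y / x) * \<psi> b (a + y) + (y / x) * \<psi> (b - x) (a + y)" using i iii by simp
    moreover have "(1 - y / x) * \<psi> b (a + y) \<le> (1 - y / x) * (A + y * DR)"
      by (rule mult_left_mono[OF iv yx0(1)])
    moreover have "(y / x) * \<psi> (b - x) (a + y) \<le> (y / x) * (P + (y / h) * K)"
      by (rule mult_left_mono[OF ii yx0(2)])
    ultimately show ?thesis by linarith
  qed
  have "x * A \<le> x * ((1 - y / x) * (A + y * DR) + (y / x) * (P + (y / h) * K))"
    using S3 x by simp
  also have "\<dots> = (x - y) * (A + y * DR) + y * (P + (y / h) * K)"
    using x by (simp add: field_simps)
  finally have S4: "x * A \<le> (x - y) * (A + y * DR) + y * (P + (y / h) * K)" .
  have e1: "(x - y) * (A + y * DR) = x * A - y * A + y * ((x - y) * DR)" by (simp add: algebra_simps)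
  have e2: "y * (P + (y / h) * K) = y * P + y * ((y / h) * K)" by (simp add: algebra_simps)
  have e3: "y * ((x - y) * DR + (y / h) * K) = y * ((x - y) * DR) + y * ((y / h) * K)" by (simp add: algebra_simps)
  have e4: "y * (A - P) = y * A - y * P" by (simp add: algebra_simps)
  have z1: "0 \<le> (x - y) * (A + y * DR) + y * (P + (y / h) * K) - x * A" using S4 by simp
  have z2: "(x - y) * (A + y * DR) + y * (P + (y / h) * K) - x * A = y * ((x - y) * DR + (y / h) * K) - y * (A - P)"
    by (simp add: algebra_simps)
  have "y * (A - P) \<le> y * ((x - y) * DR + (y / h) * K)"
    using z1 unfolding z2 by simp
  then have S5: "A - P \<le> (x - y) * DR + (y / h) * K" using y0 by simp
  have "A - P = x * DL" using x by (simp add: DL_def)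
  moreover have "(x - y) * DR = x * DR - y * DR" by (simp add: algebra_simps)
  moreover have "(y / h) * K = y * (K / h)" by simp
  moreover have "y * c = y * (K / h) - y * DR" by (simp add: c_def algebra_simps)
  ultimately have S6: "x * DL \<le> x * DR + y * c" using S5 by linarith
  have "y * c \<le> y * \<bar>c\<bar>" using y0 by (simp add: mult_left_mono)
  also have "\<dots> \<le> (x * \<epsilon> / (\<bar>c\<bar> + 1)) * \<bar>c\<bar>" by (rule mult_right_mono[OF yc]) simp
  also have "\<dots> < x * \<epsilon>"
  proof -
    have "x * \<epsilon> > 0" using x eps by simp
    then have "x * \<epsilon> * \<bar>c\<bar> < x * \<epsilon> * (\<bar>c\<bar> + 1)"
      by (intro mult_strict_left_mono) auto
    then have "(x * \<epsilon> * \<bar>c\<bar>) / (\<bar>c\<bar> + 1) < x * \<epsilon>"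
      by (simp add: pos_divide_less_eq)
    then show ?thesis by simp
  qed
  finally have "y * c < x * \<epsilon>" .
  moreover have "x * \<epsilon> = x * DL - x * DR" by (simp add: \<epsilon>_def algebra_simps)
  ultimately have "x * DL < x * DL" using S6 by linarith
  then show False by simp
qed

lemma glue:
  fixes f :: "real \<Rightarrow> real"
  assumes AM: "A \<le> M" and MB: "M \<le> B"
    and c1: "convex_on {A..M} f" and c2: "convex_on {M..B} f"
    and jn: "\<And>x z. A \<le> x \<Longrightarrow> x < M \<Longrightarrow> M < z \<Longrightarrow> z \<le> B \<Longrightarrow>
               (f M - f x) / (M - x) \<le> (f z - f M) / (z - M)"
  shows "convex_on {A..B} f"
proof (rule convex_on_linorderI)
  show "convex {A..B}" by simp
  fix t x y :: real assume t: "0 < t" "t < 1" and xI: "x \<in> {A..B}" and yI: "y \<in> {A..B}" and xy: "x < y"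
  define w where "w = (1 - t) *\<^sub>R x + t *\<^sub>R y"
  have w: "w = x + t * (y - x)" by (simp add: w_def algebra_simps)
  have "t * (y - x) \<le> y - x" using t xy by (intro mult_left_le_one_le) auto
  then have wx: "x \<le> w" "w \<le> y" using t xy unfolding w by (simp, linarith)
  show "f ((1 - t) *\<^sub>R x + t *\<^sub>R y) \<le> (1 - t) * f x + t * f y"
  proof (cases "y \<le> M")
    case True
    then show ?thesis using t xI yI xy by (intro convex_onD[OF c1]) auto
  next
    case yM: False
    show ?thesis
    proof (cases "M \<le> x")
      case True
      then show ?thesis using t xI yI yM xy by (intro convex_onD[OF c2]) auto
    next
      case xM: False
      define p where "p = M - x"
      define q where "q = y - M"
      have p: "0 < p" and q: "0 < q" using xM yM by (simp_all add: p_def q_def)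
      have j: "(f M - f x) / p \<le> (f y - f M) / q"
        using jn[of x y] xI yI xM yM by (simp add: p_def q_def)
      then have "(f M - f x) * q \<le> (f y - f M) * p" using p q by (simp add: field_simps)
      then have fM: "f M * (p + q) \<le> f x * q + f y * p" by (simp add: algebra_simps)
      define L where "L = f x + (f y - f x) / (y - x) * (M - x)"
      have yxpq: "y - x = p + q" by (simp add: p_def q_def)
      have fML: "f M \<le> L"
      proof -
        have "f M \<le> (f x * q + f y * p) / (p + q)" using fM p q by (simp add: field_simps)
        also have "\<dots> = L" unfolding L_def yxpq using p q by (simp add: p_def[symmetric] field_simps)
        finally show ?thesis .
      qed
      have goal: "(1 - t) * f x + t * f y = f x + (f y - f x) / (y - x) * (w - x)"
        using xy by (simp add: w field_simps)
      show ?thesis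
      proof (cases "w \<le> M")
        case True
        have cs: "convex_on {x..M} f" by (rule convex_on_subset[OF c1]) (use xI in auto)
        have "f w \<le> (f M - f x) / (M - x) * (w - x) + f x"
          using convex_onD_Icc'[OF cs, of w] True wx by simp
        also have "\<dots> \<le> (L - f x) / (M - x) * (w - x) + f x"
          using fML p wx by (intro add_right_mono mult_right_mono divide_right_mono) (auto simp: p_def)
        also have "\<dots> = f x + (f y - f x) / (y - x) * (w - x)"
          using p by (simp add: L_def p_def[symmetric])
        finally show ?thesis using goal by (simp add: w_def)
      next
        case False
        have cs: "convex_on {M..y} f" by (rule convex_on_subset[OF c2]) (use yI in auto)
        have "f w \<le> (f M - f y) / (y - M) * (y - w) + f y"
          using convex_onD_Icc''[OF cs, of w] False wx by simp
        also have "\<dots> \<le> (L - f y) / (y - M) * (y - w) + f y"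
          using fML q wx by (intro add_right_mono mult_right_mono divide_right_mono) (auto simp: q_def)
        also have "\<dots> = f x + (f y - f x) / (y - x) * (w - x)"
        proof -
          have "L - f y = (f y - f x) / (y - x) * (M - x) - (f y - f x)" by (simp add: L_def)
          also have "\<dots> = - ((f y - f x) / (y - x) * (y - M))"
            using xy by (simp add: field_simps)
          finally have "(L - f y) / (y - M) * (y - w) = - ((f y - f x) / (y - x)) * (y - w)"
            using q by (simp add: q_def[symmetric])
          moreover have "f x + (f y - f x) / (y - x) * (w - x) = f y - (f y - f x) / (y - x) * (y - w)"
            using xy by (simp add: field_simps)
          ultimately show ?thesis by simp
        qed
        finally show ?thesis using goal by (simp add: w_def)
      qed
    qed
  qed
qed



lemma convex_on_shift:
  fixes F :: "real \<Rightarrow> real"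
  assumes "convex_on {c..d} F"
  shows "convex_on {c + e..d + e} (\<lambda>s. F (s - e))"
proof (rule convex_onI)
  show "convex {c + e..d + e}" by simp
  fix t x y :: real assume t: "0 < t" "t < 1" and xy: "x \<in> {c + e..d + e}" "y \<in> {c + e..d + e}"
  have "F ((1 - t) *\<^sub>R (x - e) + t *\<^sub>R (y - e)) \<le> (1 - t) * F (x - e) + t * F (y - e)"
    using t xy by (intro convex_onD[OF assms]) auto
  moreover have "(1 - t) *\<^sub>R (x - e) + t *\<^sub>R (y - e) = (1 - t) *\<^sub>R x + t *\<^sub>R y - e"
    by (simp add: algebra_simps)
  ultimately show "F ((1 - t) *\<^sub>R x + t *\<^sub>R y - e) \<le> (1 - t) * F (x - e) + t * F (y - e)" by simp
qed

lemma convex_on_eq: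
  fixes f g :: "real \<Rightarrow> real"
  assumes f: "convex_on S f" and eq: "\<And>x. x \<in> S \<Longrightarrow> f x = g x"
  shows "convex_on S g"
proof (rule convex_onI)
  show "convex S" using convex_on_imp_convex[OF f] .
  fix t x y :: real assume t: "0 < t" "t < 1" and xy: "x \<in> S" "y \<in> S"
  have m: "(1 - t) *\<^sub>R x + t *\<^sub>R y \<in> S"
    using t xy by (intro convexD[OF convex_on_imp_convex[OF f]]) auto
  have "f ((1 - t) *\<^sub>R x + t *\<^sub>R y) \<le> (1 - t) * f x + t * f y"
    using t xy by (intro convex_onD[OF f]) auto
  then show "g ((1 - t) *\<^sub>R x + t *\<^sub>R y) \<le> (1 - t) * g x + t * g y"
    using eq[OF m] eq[OF xy(1)] eq[OF xy(2)] by simp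
qed

lemma vk_shift: "(vk a b k b :: real^'n::{finite,linorder}) = vk a b (Suc k) a"
  by (simp add: vec_eq_iff vk_def)

lemma u_piece:
  assumes ab: "a < b" and k: "k < CARD('n::{finite,linorder})"
    and s: "real k * (b - a) \<le> s" "s \<le> (real k + 1) * (b - a)"
  shows "(u_vec a b s :: real^'n::{finite,linorder}) = vk a b k (a + s - real k * (b - a))"
proof (cases "real k * (b - a) < s")
  case True
  then have "i_star CARD('n) a b s = k" using istar_eq[OF ab k True s(2)] by simp
  then show ?thesis by (simp add: u_vk mult.commute)
next
  case False
  then have s0: "s = real k * (b - a)" using s by simp
  show ?thesis
  proof (cases k)
    case 0
    then have "s = 0" using s0 by simp
    then show ?thesis using 0 by (simp add: u_vk i_star_def)
  next
    case (Suc k0)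
    have sk: "s = (real k0 + 1) * (b - a)" using s0 Suc by simp
    have l1: "real k0 * (b - a) < s" using sk ab by (simp add: algebra_simps)
    have l2: "s \<le> (real k0 + 1) * (b - a)" using sk by simp
    have ik: "i_star CARD('n) a b s = k0"
      using istar_eq[OF ab _ l1 l2] k Suc by simp
    have "(u_vec a b s :: real^'n::{finite,linorder}) = vk a b k0 (a + s - (b - a) * real k0)"
      by (simp only: u_vk ik)
    moreover have "a + s - (b - a) * real k0 = b" using sk by (simp add: algebra_simps)
    ultimately have "(u_vec a b s :: real^'n::{finite,linorder}) = vk a b k0 b" by simp
    then show ?thesis using vk_shift s0 Suc by simp
  qed
qed

lemma vk_update:
  assumes "rank_idx (i::'n::{finite,linorder}) = k"
  shows "(\<chi> j. if j = i then t else (vk a b k c :: real^'n::{finite,linorder}) $ j) = (vk a b k t :: real^'n::{finite,linorder})"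
  using assms rank_inj[where 'n='n] by (auto simp: vec_eq_iff vk_def dest: injD)

lemma piece_convex:
  fixes \<phi> :: "real^'n::{finite,linorder} \<Rightarrow> real"
  assumes ab: "a < b" and cc: "compwise_convex_on a b \<phi>" and k: "k < CARD('n)"
  shows "convex_on {real k * (b - a)..(real k + 1) * (b - a)} (\<lambda>s. \<phi> (u_vec a b s))"
proof -
  obtain i :: 'n where i: "rank_idx i = k" using rank_surj[OF k] by blast
  have x0: "(vk a b k a :: real^'n::{finite,linorder}) \<in> box_n a b" using ab by (intro vk_box) auto
  have "convex_on {a..b} (\<lambda>t. \<phi> (\<chi> j. if j = i then t else (vk a b k a :: real^'n::{finite,linorder}) $ j))"
    using cc x0 unfolding compwise_convex_on_def by blast
  then have c0: "convex_on {a..b} (\<lambda>t. \<phi> (vk a b k t))" by (simp only: vk_update[OF i])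
  define e where "e = real k * (b - a) - a"
  have c1: "convex_on {a + e..b + e} (\<lambda>s. \<phi> (vk a b k (s - e)))"
    using convex_on_shift[OF c0] by simp
  have iv: "{a + e..b + e} = {real k * (b - a)..(real k + 1) * (b - a)}"
    by (simp add: e_def algebra_simps)
  show ?thesis
  proof (rule convex_on_eq[OF c1[unfolded iv]])
    fix s assume "s \<in> {real k * (b - a)..(real k + 1) * (b - a)}"
    then show "\<phi> (vk a b k (s - e)) = \<phi> (u_vec a b s)"
      using u_piece[OF ab k, of s] by (simp add: e_def algebra_simps)
  qed
qed



definition wv :: "real \<Rightarrow> real \<Rightarrow> nat \<Rightarrow> real \<Rightarrow> real \<Rightarrow> real^'n::{finite,linorder}" where
  "wv a b k0 p q = (\<chi> j. if rank_idx j < k0 then b else if rank_idx j = k0 then p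
                         else if rank_idx j = Suc k0 then q else a)"

lemma wv_box: "a \<le> b \<Longrightarrow> p \<in> {a..b} \<Longrightarrow> q \<in> {a..b} \<Longrightarrow> (wv a b k0 p q :: real^'n::{finite,linorder}) \<in> box_n a b"
  by (simp add: wv_def box_n_def)

lemma wv_left: "(vk a b k0 t :: real^'n::{finite,linorder}) = wv a b k0 t a"
  by (simp add: vec_eq_iff vk_def wv_def)

lemma wv_right: "(vk a b (Suc k0) t :: real^'n::{finite,linorder}) = wv a b k0 b t"
  by (simp add: vec_eq_iff vk_def wv_def)

lemma wv_upd_p:
  assumes "rank_idx (i::'n::{finite,linorder}) = k0"
  shows "(\<chi> j. if j = i then t else (wv a b k0 c q :: real^'n::{finite,linorder}) $ j) = (wv a b k0 t q :: real^'n::{finite,linorder})"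
  using assms rank_inj[where 'n='n] by (auto simp: vec_eq_iff wv_def dest: injD)

lemma wv_upd_q:
  assumes "rank_idx (i::'n::{finite,linorder}) = Suc k0"
  shows "(\<chi> j. if j = i then t else (wv a b k0 p c :: real^'n::{finite,linorder}) $ j) = (wv a b k0 p t :: real^'n::{finite,linorder})"
proof -
  have r: "\<And>j::'n. rank_idx j = Suc k0 \<longleftrightarrow> j = i" using assms rank_inj[where 'n='n] by (metis injD)
  show ?thesis
  proof (rule vec_eq_iff[THEN iffD2], rule allI)
    fix j :: 'n
    show "(\<chi> j. if j = i then t else (wv a b k0 p c :: real^'n::{finite,linorder}) $ j) $ j = (wv a b k0 p t :: real^'n::{finite,linorder}) $ j"
    proof (cases "j = i")
      case True then show ?thesis using assms by (simp add: wv_def)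
    next
      case False then have "rank_idx j \<noteq> Suc k0" using r by simp
      then show ?thesis using False by (simp add: wv_def)
    qed
  qed
qed

lemma wv_S:
  assumes "Suc k0 < CARD('n::{finite,linorder})"
  shows "S_sum a (wv a b k0 p q :: real^'n::{finite,linorder}) = real k0 * (b - a) + (p - a) + (q - a)"
proof -
  have "S_sum a (wv a b k0 p q :: real^'n::{finite,linorder}) =
     (\<Sum>j\<in>(UNIV::'n set). (\<lambda>r. (if r < k0 then b - a else 0) + (if r = k0 then p - a else 0)
        + (if r = Suc k0 then q - a else 0)) (rank_idx j))"
    unfolding S_sum_def wv_def by (intro sum.cong) auto
  also have "\<dots> = (\<Sum>r<CARD('n). (if r < k0 then b - a else 0) + (if r = k0 then p - a else 0)
        + (if r = Suc k0 then q - a else 0))"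
    by (rule sum_rank)
  also have "\<dots> = (\<Sum>r<CARD('n). (if r < k0 then b - a else 0)) + (p - a) + (q - a)"
    using assms by (simp add: sum.distrib)
  also have "(\<Sum>r<CARD('n). (if r < k0 then b - a else 0)) = (\<Sum>r\<in>{..<k0}. b - a)"
    using assms by (intro sum.mono_neutral_cong_right) auto
  finally show ?thesis by simp
qed

lemma junction_inst:
  fixes \<phi> :: "real^'n::{finite,linorder} \<Rightarrow> real"
  assumes ab: "a < b" and sc: "schur_concave_on (box_n a b) \<phi>" and cc: "compwise_convex_on a b \<phi>"
    and k0: "Suc k0 < CARD('n)"
    and x: "0 < x" "x \<le> b - a" and y': "0 < y'" "y' \<le> b - a"
  shows "(\<phi> (u_vec a b (real (Suc k0) * (b - a))) - \<phi> (u_vec a b (real (Suc k0) * (b - a) - x))) / x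
       \<le> (\<phi> (u_vec a b (real (Suc k0) * (b - a) + y')) - \<phi> (u_vec a b (real (Suc k0) * (b - a)))) / y'"
proof -
  define M where "M = real (Suc k0) * (b - a)"
  define \<psi> where "\<psi> p q = \<phi> (wv a b k0 p q :: real^'n::{finite,linorder})" for p q
  have k0': "k0 < CARD('n)" using k0 by simp
  have GL: "\<phi> (u_vec a b (M - x)) = \<psi> (b - x) a"
  proof -
    have "(u_vec a b (M - x) :: real^'n::{finite,linorder}) = vk a b k0 (a + (M - x) - real k0 * (b - a))"
      using x by (intro u_piece[OF ab k0']) (auto simp: M_def algebra_simps)
    also have "a + (M - x) - real k0 * (b - a) = b - x" by (simp add: M_def algebra_simps)
    finally show ?thesis by (simp add: \<psi>_def wv_left)
  qed
  have GR: "\<phi> (u_vec a b (M + y')) = \<psi> b (a + y')"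
  proof -
    have "(u_vec a b (M + y') :: real^'n::{finite,linorder}) = vk a b (Suc k0) (a + (M + y') - real (Suc k0) * (b - a))"
      using y' by (intro u_piece[OF ab k0]) (auto simp: M_def algebra_simps)
    also have "a + (M + y') - real (Suc k0) * (b - a) = a + y'" by (simp add: M_def algebra_simps)
    finally show ?thesis by (simp add: \<psi>_def wv_right)
  qed
  have uM: "(u_vec a b M :: real^'n::{finite,linorder}) = wv a b k0 b a"
  proof -
    have "(u_vec a b M :: real^'n::{finite,linorder}) = vk a b (Suc k0) (a + M - real (Suc k0) * (b - a))"
      using ab by (intro u_piece[OF ab k0]) (auto simp: M_def algebra_simps)
    then show ?thesis by (simp add: M_def wv_right)
  qed
  have GM: "\<phi> (u_vec a b M) = \<psi> b a" by (simp add: uM \<psi>_def)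
  obtain i1 :: 'n where i1: "rank_idx i1 = k0" using rank_surj[OF k0'] by blast
  obtain i2 :: 'n where i2: "rank_idx i2 = Suc k0" using rank_surj[OF k0] by blast
  have cp: "convex_on {a..b} (\<lambda>p. \<psi> p q)" if q: "q \<in> {a..b}" for q
  proof -
    have "(wv a b k0 b q :: real^'n::{finite,linorder}) \<in> box_n a b" using ab q by (intro wv_box) auto
    then have "convex_on {a..b} (\<lambda>t. \<phi> (\<chi> j. if j = i1 then t else (wv a b k0 b q :: real^'n::{finite,linorder}) $ j))"
      using cc unfolding compwise_convex_on_def by blast
    then show ?thesis by (simp only: wv_upd_p[OF i1] \<psi>_def)
  qed
  have cq: "convex_on {a..b} (\<lambda>q. \<psi> p q)" if p: "p \<in> {a..b}" for p
  proof -
    have "(wv a b k0 p a :: real^'n::{finite,linorder}) \<in> box_n a b" using ab p by (intro wv_box) auto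
    then have "convex_on {a..b} (\<lambda>t. \<phi> (\<chi> j. if j = i2 then t else (wv a b k0 p a :: real^'n::{finite,linorder}) $ j))"
      using cc unfolding compwise_convex_on_def by blast
    then show ?thesis by (simp only: wv_upd_q[OF i2] \<psi>_def)
  qed
  have scw: "\<psi> b a \<le> \<psi> (b - y) (a + y)" if y: "0 \<le> y" "y \<le> b - a" for y
  proof -
    let ?z = "wv a b k0 (b - y) (a + y) :: real^'n::{finite,linorder}"
    let ?u = "u_vec a b M :: real^'n::{finite,linorder}"
    have zb: "?z \<in> box_n a b" using y by (intro wv_box) auto
    have zS: "S_sum a ?z = M" using wv_S[OF k0, of a b "b - y" "a + y"] by (simp add: M_def algebra_simps)
    have M0: "0 \<le> M" "M \<le> real CARD('n) * (b - a)"
    proof -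
      show "0 \<le> M" using ab by (simp add: M_def)
      have "real (Suc k0) \<le> real CARD('n)" using k0 by simp
      then show "M \<le> real CARD('n) * (b - a)" using ab unfolding M_def by (intro mult_right_mono) auto
    qed
    have uP: "?u \<in> box_n a b" "card (Iset a b ?u) \<le> 1" "S_sum a ?u = M"
      using u_props[OF ab M0] by auto
    have "S_sum a ?u = S_sum a ?z" using uP(3) zS by simp
    then have "majorizes ?u ?z" by (rule majorizes_ext[OF ab zb uP(1) uP(2)])
    then have "\<phi> ?u \<le> \<phi> ?z" using sc zb uP(1) by (auto simp: schur_concave_on_def)
    then show ?thesis using GM by (simp add: \<psi>_def)
  qed
  have "(\<psi> b a - \<psi> (b - x) a) / x \<le> (\<psi> b (a + y') - \<psi> b a) / y'"
    by (rule junction_abstract[OF ab cp cq scw x y'])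
  then show ?thesis using GL GR GM by (simp add: M_def)
qed



lemma swap_div: "(p - q) / (c - d) = (q - p) / (d - (c::real))"
  by (metis minus_diff_eq minus_divide_divide)

lemma G_convex:
  fixes \<phi> :: "real^'n::{finite,linorder} \<Rightarrow> real"
  assumes ab: "a < b" and sc: "schur_concave_on (box_n a b) \<phi>" and cc: "compwise_convex_on a b \<phi>"
  shows "convex_on {0..real CARD('n) * (b - a)} (\<lambda>s. \<phi> (u_vec a b s))"
proof -
  define G where "G = (\<lambda>s. \<phi> (u_vec a b s))"
  define h where "h = b - a"
  have h: "0 < h" using ab by (simp add: h_def)
  have "\<forall>m. 1 \<le> m \<longrightarrow> m \<le> CARD('n) \<longrightarrow> convex_on {0..real m * h} G"
  proof (intro allI)
    fix m show "1 \<le> m \<longrightarrow> m \<le> CARD('n) \<longrightarrow> convex_on {0..real m * h} G"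
    proof (induction m)
      case 0 then show ?case by simp
    next
      case (Suc m0)
      show ?case
      proof (intro impI)
        assume m1: "1 \<le> Suc m0" and mn: "Suc m0 \<le> CARD('n)"
        have piece: "convex_on {real m0 * h..(real m0 + 1) * h} G"
          using piece_convex[OF ab cc, of m0] mn by (simp add: G_def h_def)
        show "convex_on {0..real (Suc m0) * h} G"
        proof (cases "m0 = 0")
          case True then show ?thesis using piece by simp
        next
          case False
          then obtain k0 where k0: "m0 = Suc k0" by (cases m0) auto
          have IH: "convex_on {0..real m0 * h} G" using Suc.IH False mn by simp
          define M where "M = real m0 * h"
          have M0: "0 \<le> M" using h by (simp add: M_def)
          have k0n: "Suc k0 < CARD('n)" using k0 mn by simp
          have "convex_on {0..(real m0 + 1) * h} G"
          proof (rule glue[OF M0 _ IH[folded M_def] piece[folded M_def]])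
            show "M \<le> (real m0 + 1) * h" using h by (simp add: M_def algebra_simps)
            fix x z assume x: "0 \<le> x" "x < M" and z: "M < z" "z \<le> (real m0 + 1) * h"
            define y' where "y' = z - M"
            have y': "0 < y'" "y' \<le> b - a" using z by (simp_all add: y'_def M_def h_def algebra_simps)
            define h' where "h' = min (M - x) h"
            have h': "0 < h'" "h' \<le> b - a" using x h by (simp_all add: h'_def h_def)
            have J: "(G M - G (M - h')) / h' \<le> (G (M + y') - G M) / y'"
              using junction_inst[OF ab sc cc k0n h' y'] by (simp add: G_def M_def k0 h_def)
            have sl: "(G M - G x) / (M - x) \<le> (G M - G (M - h')) / h'"
            proof (cases "M - x \<le> h")
              case True then show ?thesis by (simp add: h'_def)
            next
              case False
              then have hh: "h' = h" by (simp add: h'_def)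
              have "(G x - G M) / (x - M) \<le> (G (M - h) - G M) / ((M - h) - M)"
                by (rule convex_on_slope_le(2)[OF IH[folded M_def]]) (use x False h in auto)
              moreover have "(G x - G M) / (x - M) = (G M - G x) / (M - x)" by (rule swap_div)
              moreover have "(G (M - h) - G M) / ((M - h) - M) = (G M - G (M - h)) / (M - (M - h))" by (rule swap_div)
              moreover have "M - (M - h) = h" by simp
              ultimately show ?thesis using hh by simp
            qed
            have "z = M + y'" by (simp add: y'_def)
            then show "(G M - G x) / (M - x) \<le> (G z - G M) / (z - M)"
              using sl J by (simp add: y'_def)
          qed
          then show ?thesis by (simp add: add.commute)
        qed
      qed
    qed
  qed
  then show ?thesis by (simp add: G_def h_def)
qed

lemma Theta_convex:
  fixes \<phi> :: "real^'n::{finite,linorder} \<Rightarrow> real"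
  assumes ab: "a < b" and sc: "schur_concave_on (box_n a b) \<phi>" and cc: "compwise_convex_on a b \<phi>"
  shows "convex (Theta_alpha \<phi> a b \<alpha>)"
proof (rule convexI)
  have Gc: "convex_on {0..real CARD('n) * (b - a)} (\<lambda>s. \<phi> (u_vec a b s))" by (rule G_convex[OF ab sc cc])
  fix p1 p2 and u v :: real
  assume p1: "p1 \<in> Theta_alpha \<phi> a b \<alpha>" and p2: "p2 \<in> Theta_alpha \<phi> a b \<alpha>" and uv: "0 \<le> u" "0 \<le> v" "u + v = 1"
  obtain x1 t1 where q1: "p1 = (x1, t1)" "\<phi> (u_vec a b (S_sum a x1)) \<le> t1" "t1 \<le> \<alpha>" "x1 \<in> box_n a b"
    using p1 by (auto simp: Theta_alpha_def)
  obtain x2 t2 where q2: "p2 = (x2, t2)" "\<phi> (u_vec a b (S_sum a x2)) \<le> t2" "t2 \<le> \<alpha>" "x2 \<in> box_n a b"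
    using p2 by (auto simp: Theta_alpha_def)
  define x where "x = u *\<^sub>R x1 + v *\<^sub>R x2"
  have xb: "x \<in> box_n a b"
  proof -
    have "a \<le> x $ i \<and> x $ i \<le> b" for i
    proof -
      have "a = u * a + v * a" using uv by (metis distrib_right mult_1)
      also have "\<dots> \<le> u * x1 $ i + v * x2 $ i"
        using q1(4) q2(4) uv by (intro add_mono mult_left_mono) (auto simp: box_n_def)
      finally have l: "a \<le> u * x1 $ i + v * x2 $ i" .
      have "u * x1 $ i + v * x2 $ i \<le> u * b + v * b"
        using q1(4) q2(4) uv by (intro add_mono mult_left_mono) (auto simp: box_n_def)
      also have "\<dots> = b" using uv by (metis distrib_right mult_1)
      finally show ?thesis using l by (simp add: x_def)
    qed
    then show ?thesis by (simp add: box_n_def)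
  qed
  have xS: "S_sum a x = u * S_sum a x1 + v * S_sum a x2"
  proof -
    have "S_sum a x = (\<Sum>i\<in>UNIV. u * (x1 $ i - a) + v * (x2 $ i - a))"
      unfolding S_sum_def x_def
    proof (intro sum.cong refl)
      fix i
      have "a = u * a + v * a" using uv by (metis distrib_right mult_1)
      then show "(u *\<^sub>R x1 + v *\<^sub>R x2) $ i - a = u * (x1 $ i - a) + v * (x2 $ i - a)"
        by (simp add: algebra_simps)
    qed
    then show ?thesis by (simp add: S_sum_def sum.distrib sum_distrib_left)
  qed
  have s1: "S_sum a x1 \<in> {0..real CARD('n) * (b - a)}" using S_range[OF q1(4)] by simp
  have s2: "S_sum a x2 \<in> {0..real CARD('n) * (b - a)}" using S_range[OF q2(4)] by simp
  have "\<phi> (u_vec a b (S_sum a x)) \<le> u * \<phi> (u_vec a b (S_sum a x1)) + v * \<phi> (u_vec a b (S_sum a x2))"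
  proof -
    have vu: "1 - v = u" using uv by simp
    have "\<phi> (u_vec a b ((1 - v) *\<^sub>R S_sum a x1 + v *\<^sub>R S_sum a x2)) \<le>
        (1 - v) * \<phi> (u_vec a b (S_sum a x1)) + v * \<phi> (u_vec a b (S_sum a x2))"
      using uv s1 s2 by (intro convex_onD[OF Gc]) auto
    then show ?thesis unfolding vu xS by simp
  qed
  also have "\<dots> \<le> u * t1 + v * t2"
    using q1(2) q2(2) uv by (intro add_mono mult_left_mono) auto
  finally have lo: "\<phi> (u_vec a b (S_sum a x)) \<le> u * t1 + v * t2" .
  have "u * t1 + v * t2 \<le> u * \<alpha> + v * \<alpha>"
    using q1(3) q2(3) uv by (intro add_mono mult_left_mono) auto
  also have "\<dots> = \<alpha>" using uv by (metis distrib_right mult_1)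
  finally have hi: "u * t1 + v * t2 \<le> \<alpha>" .
  have "u *\<^sub>R p1 + v *\<^sub>R p2 = (x, u * t1 + v * t2)" using q1(1) q2(1) by (simp add: x_def)
  then show "u *\<^sub>R p1 + v *\<^sub>R p2 \<in> Theta_alpha \<phi> a b \<alpha>"
    using lo hi xb by (simp add: Theta_alpha_def)
qed


theorem mainTheorem14:
  fixes \<phi> :: "real^'n::{finite,linorder} \<Rightarrow> real" and a b \<alpha> :: real
  assumes "a < b"
    and "schur_concave_on (box_n a b) \<phi>"
  shows "convex hull (S_alpha \<phi> a b \<alpha>) = convex hull (Theta_alpha \<phi> a b \<alpha>) \<and>
         (compwise_convex_on a b \<phi> \<longrightarrow> convex (Theta_alpha \<phi> a b \<alpha>))"
proof
  show "convex hull (S_alpha \<phi> a b \<alpha>) = convex hull (Theta_alpha \<phi> a b \<alpha>)"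
    by (rule part1[OF assms])
  show "compwise_convex_on a b \<phi> \<longrightarrow> convex (Theta_alpha \<phi> a b \<alpha>)"
    using Theta_convex[OF assms] by blast
qed

end
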